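(* The categories $\sigma\ell\mathbb{G}_u$ and $\mathcal{V}_{\sigma\ell\mathbb{G}_u}$ are isomorphic via the functor $U_u\colon\mathcal{V}_{\sigma\ell\mathbb{G}_u}\to\sigma\ell\mathbb{G}_u$ that forgets $\bigvee^-$ (keeping the $\ell$-group operations and interpreting the constant $1$ as the designated weak unit; identity on maps) and the functor $F_u\colon\sigma\ell\mathbb{G}_u\to\mathcal{V}_{\sigma\ell\mathbb{G}_u}$ that adds the operation $\bigvee^-(g,f_1,f_2,\dots):=\sup_{n\ge1}\{f_n\wedge g\}$ and interprets $1$ as the designated weak unit (identity on maps); both are well defined and mutually inverse. In particular the category of Dedekind $\sigma$-complete $\ell$-groups with weak unit is an infinitary variety. An element $1$ of an $\ell$-group $G$ is a weak (order) unit if $1\ge0$ and for all $f\in G$, $f\wedge1=0$ implies $f=0$. Dedekind $\sigma$-complete: every countable subset with an upper bound has a supremum. $\sigma$-continuous: preserves all existing countable suprema. $\sigma\ell\mathbb{G}_u$ is the category of Dedekind $\sigma$-complete $\ell$-groups with a designated weak unit, with $\sigma$-continuous $\ell$-morphisms preserving the designated weak unit. $\mathcal{V}_{\sigma\ell\mathbb{G}}$ is the variety of algebras $(G,0,+,-,\vee,\wedge,\bigvee^-)$, $\bigvee^-$ of countably infinite arity with $\bigvee_{n\ge1}^g f_n:=\bigvee^-(g,f_1,f_2,\dots)$, satisfying the $\ell$-group axioms and (A1) $\bigvee_{n\ge1}^g f_n=\bigvee_{n\ge1}^g(f_n\wedge g)$; (A2) $\bigvee_{n\ge1}^g f_n=(f_1\wedge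 g)\vee\bigvee^-(g,f_2,f_3,\dots)$; (A3) $\bigvee_{n\ge1}^g(f_n\wedge h)\le h$ ($a\le b$ meaning $a\wedge b=a$). $\mathcal{V}_{\sigma\ell\mathbb{G}_u}$ is the variety in the language of $\mathcal{V}_{\sigma\ell\mathbb{G}}$ plus a constant $1$, axiomatized by the axioms of $\mathcal{V}_{\sigma\ell\mathbb{G}}$ together with $\bigvee_{n\ge1}^{|f|}(|f|\wedge n1)=|f|$; its morphisms preserve all operations including $1$. *)

theory Defs
  imports Main
begin

text \<open>Objects are algebras whose carrier is a whole HOL type 'a (the theorem is
schematic in the types, so this ranges over all carriers).\<close>

record 'a lgu =
  zer :: 'a
  pls :: "'a \<Rightarrow> 'a \<Rightarrow> 'a"
  ng  :: "'a \<Rightarrow> 'a"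
  jn  :: "'a \<Rightarrow> 'a \<Rightarrow> 'a"
  mt  :: "'a \<Rightarrow> 'a \<Rightarrow> 'a"
  unt :: 'a

record 'a vslu = "'a lgu" +
  bigv :: "'a \<Rightarrow> (nat \<Rightarrow> 'a) \<Rightarrow> 'a"
  \<comment> \<open>bigv g f = bigvee-minus(g, f 0, f 1, ...), i.e. f 0 plays the role of f_1\<close>

definition lgroup_ax :: "('a, 'm) lgu_scheme \<Rightarrow> bool" where
  "lgroup_ax G \<longleftrightarrow>
     (\<forall>x y z. pls G (pls G x y) z = pls G x (pls G y z)) \<and>
     (\<forall>x. pls G (zer G) x = x \<and> pls G x (zer G) = x) \<and>
     (\<forall>x. pls G (ng G x) x = zer G \<and> pls G x (ng G x) = zer G) \<and>
     (\<forall>x y. jn G x y = jn G y x \<and> mt G x y = mt G y x) \<and>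
     (\<forall>x y z. jn G (jn G x y) z = jn G x (jn G y z) \<and> mt G (mt G x y) z = mt G x (mt G y z)) \<and>
     (\<forall>x y. jn G x (mt G x y) = x \<and> mt G x (jn G x y) = x) \<and>
     (\<forall>x y z. pls G x (jn G y z) = jn G (pls G x y) (pls G x z) \<and>
              pls G (jn G y z) x = jn G (pls G y x) (pls G z x))"

definition leq :: "('a, 'm) lgu_scheme \<Rightarrow> 'a \<Rightarrow> 'a \<Rightarrow> bool" where
  "leq G x y \<longleftrightarrow> mt G x y = x"

definition absv :: "('a, 'm) lgu_scheme \<Rightarrow> 'a \<Rightarrow> 'a" where
  "absv G x = jn G x (ng G x)"

definition nsmul :: "('a, 'm) lgu_scheme \<Rightarrow> nat \<Rightarrow> 'a \<Rightarrow> 'a" where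
  "nsmul G n x = (pls G x ^^ n) (zer G)"

definition is_sup :: "('a, 'm) lgu_scheme \<Rightarrow> 'a set \<Rightarrow> 'a \<Rightarrow> bool" where
  "is_sup G S s \<longleftrightarrow> (\<forall>x\<in>S. leq G x s) \<and> (\<forall>u. (\<forall>x\<in>S. leq G x u) \<longrightarrow> leq G s u)"

text \<open>Dedekind sigma-complete: every nonempty countable subset (= range of a
sequence) which is bounded above has a supremum.\<close>
definition sigma_complete :: "('a, 'm) lgu_scheme \<Rightarrow> bool" where
  "sigma_complete G \<longleftrightarrow>
     (\<forall>f :: nat \<Rightarrow> 'a. (\<exists>u. \<forall>n. leq G (f n) u) \<longrightarrow> (\<exists>s. is_sup G (range f) s))"

definition weak_unit :: "('a, 'm) lgu_scheme \<Rightarrow> 'a \<Rightarrow> bool" where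
  "weak_unit G u \<longleftrightarrow> leq G (zer G) u \<and> (\<forall>f. mt G f u = zer G \<longrightarrow> f = zer G)"

definition sigma_obj :: "'a lgu \<Rightarrow> bool" where
  "sigma_obj G \<longleftrightarrow> lgroup_ax G \<and> sigma_complete G \<and> weak_unit G (unt G)"

definition lmorph :: "('a, 'm) lgu_scheme \<Rightarrow> ('b, 'n) lgu_scheme \<Rightarrow> ('a \<Rightarrow> 'b) \<Rightarrow> bool" where
  "lmorph G H h \<longleftrightarrow>
     (\<forall>x y. h (pls G x y) = pls H (h x) (h y) \<and> h (jn G x y) = jn H (h x) (h y)
            \<and> h (mt G x y) = mt H (h x) (h y))"

definition sigma_cont :: "('a, 'm) lgu_scheme \<Rightarrow> ('b, 'n) lgu_scheme \<Rightarrow> ('a \<Rightarrow> 'b) \<Rightarrow> bool" where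
  "sigma_cont G H h \<longleftrightarrow>
     (\<forall>(f :: nat \<Rightarrow> 'a) s. is_sup G (range f) s \<longrightarrow> is_sup H (range (h \<circ> f)) (h s))"

definition sigma_mor :: "'a lgu \<Rightarrow> 'b lgu \<Rightarrow> ('a \<Rightarrow> 'b) \<Rightarrow> bool" where
  "sigma_mor G H h \<longleftrightarrow> lmorph G H h \<and> sigma_cont G H h \<and> h (unt G) = unt H"

definition vobj :: "'a vslu \<Rightarrow> bool" where
  "vobj A \<longleftrightarrow> lgroup_ax A \<and>
     (\<forall>g f. bigv A g f = bigv A g (\<lambda>n. mt A (f n) g)) \<and>
     (\<forall>g f. bigv A g f = jn A (mt A (f 0) g) (bigv A g (\<lambda>n. f (Suc n)))) \<and>
     (\<forall>g f h. leq A (bigv A g (\<lambda>n. mt A (f n) h)) h) \<and>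
     (\<forall>f. bigv A (absv A f) (\<lambda>n. mt A (absv A f) (nsmul A (Suc n) (unt A))) = absv A f)"

definition vmor :: "'a vslu \<Rightarrow> 'b vslu \<Rightarrow> ('a \<Rightarrow> 'b) \<Rightarrow> bool" where
  "vmor A B h \<longleftrightarrow>
     h (zer A) = zer B \<and> h (unt A) = unt B \<and>
     (\<forall>x y. h (pls A x y) = pls B (h x) (h y)) \<and>
     (\<forall>x. h (ng A x) = ng B (h x)) \<and>
     (\<forall>x y. h (jn A x y) = jn B (h x) (h y)) \<and>
     (\<forall>x y. h (mt A x y) = mt B (h x) (h y)) \<and>
     (\<forall>g f. h (bigv A g f) = bigv B (h g) (h \<circ> f))"

definition Uu :: "'a vslu \<Rightarrow> 'a lgu" where
  "Uu A = \<lparr>zer = zer A, pls = pls A, ng = ng A, jn = jn A, mt = mt A, unt = unt A\<rparr>"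

definition Fu :: "'a lgu \<Rightarrow> 'a vslu" where
  "Fu G = \<lparr>zer = zer G, pls = pls G, ng = ng G, jn = jn G, mt = mt G, unt = unt G,
           bigv = (\<lambda>g f. THE s. is_sup G (range (\<lambda>n. mt G (f n) g)) s)\<rparr>"

end

theory Submission
  imports Defs
begin

locale lgrp =
  fixes z :: 'a and pl :: "'a \<Rightarrow> 'a \<Rightarrow> 'a" (infixl "\<oplus>" 65) and neg :: "'a \<Rightarrow> 'a"
    and j :: "'a \<Rightarrow> 'a \<Rightarrow> 'a" (infixl "\<squnion>" 60) and m :: "'a \<Rightarrow> 'a \<Rightarrow> 'a" (infixl "\<sqinter>" 61)
  assumes assoc: "(x \<oplus> y) \<oplus> w = x \<oplus> (y \<oplus> w)"
    and zl: "z \<oplus> x = x" and zr: "x \<oplus> z = x"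
    and nl: "neg x \<oplus> x = z" and nr: "x \<oplus> neg x = z"
    and jc: "x \<squnion> y = y \<squnion> x" and mc: "x \<sqinter> y = y \<sqinter> x"
    and ja: "(x \<squnion> y) \<squnion> w = x \<squnion> (y \<squnion> w)" and ma: "(x \<sqinter> y) \<sqinter> w = x \<sqinter> (y \<sqinter> w)"
    and ab1: "x \<squnion> (x \<sqinter> y) = x" and ab2: "x \<sqinter> (x \<squnion> y) = x"
    and dl: "x \<oplus> (y \<squnion> w) = (x \<oplus> y) \<squnion> (x \<oplus> w)"
    and dr: "(y \<squnion> w) \<oplus> x = (y \<oplus> x) \<squnion> (w \<oplus> x)"
begin

definition le (infix "\<preceq>" 50) where "x \<preceq> y \<longleftrightarrow> x \<sqinter> y = x"

lemma mi: "x \<sqinter> x = x" by (metis ab1 ab2)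
lemma ji: "x \<squnion> x = x" by (metis ab1 ab2)
lemma le_j: "x \<preceq> y \<longleftrightarrow> x \<squnion> y = y" unfolding le_def by (metis ab1 ab2 jc mc)
lemma le_refl[simp]: "x \<preceq> x" by (simp add: le_def mi)
lemma le_antisym: "x \<preceq> y \<Longrightarrow> y \<preceq> x \<Longrightarrow> x = y" unfolding le_def by (metis mc)
lemma le_trans: "x \<preceq> y \<Longrightarrow> y \<preceq> w \<Longrightarrow> x \<preceq> w" unfolding le_def by (metis ma)
lemma m1: "x \<sqinter> y \<preceq> x" unfolding le_def by (metis ma mc mi)
lemma m2: "x \<sqinter> y \<preceq> y" unfolding le_def by (metis ma mi)
lemma mglb: "w \<preceq> x \<Longrightarrow> w \<preceq> y \<Longrightarrow> w \<preceq> x \<sqinter> y" unfolding le_def by (metis ma)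
lemma j1: "x \<preceq> x \<squnion> y" unfolding le_j by (metis ja ji)
lemma j2: "y \<preceq> x \<squnion> y" unfolding le_j by (metis ja ji jc)
lemma jlub: "x \<preceq> w \<Longrightarrow> y \<preceq> w \<Longrightarrow> x \<squnion> y \<preceq> w" unfolding le_j by (metis ja)
lemma le_m_iff: "w \<preceq> x \<sqinter> y \<longleftrightarrow> w \<preceq> x \<and> w \<preceq> y" by (meson le_trans m1 m2 mglb)
lemma le_j_iff: "x \<squnion> y \<preceq> w \<longleftrightarrow> x \<preceq> w \<and> y \<preceq> w" by (meson le_trans j1 j2 jlub)

lemma cancl: "a \<oplus> x = a \<oplus> y \<Longrightarrow> x = y" by (metis assoc nl zl)
lemma cancr: "x \<oplus> a = y \<oplus> a \<Longrightarrow> x = y" by (metis assoc nr zr)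
lemma nn[simp]: "neg (neg x) = x" by (metis cancr nl nr)
lemma np: "neg (x \<oplus> y) = neg y \<oplus> neg x" by (metis assoc cancl nr zl)
lemma nz[simp]: "neg z = z" by (metis nl zr)
lemma pml: "x \<preceq> y \<Longrightarrow> a \<oplus> x \<preceq> a \<oplus> y" unfolding le_j by (metis dl)
lemma pmr: "x \<preceq> y \<Longrightarrow> x \<oplus> a \<preceq> y \<oplus> a" unfolding le_j by (metis dr)
lemma pm2: "x \<preceq> y \<Longrightarrow> x' \<preceq> y' \<Longrightarrow> x \<oplus> x' \<preceq> y \<oplus> y'" by (meson le_trans pml pmr)
lemma pml_iff: "a \<oplus> x \<preceq> a \<oplus> y \<longleftrightarrow> x \<preceq> y"
  by (metis assoc nl pml zl)
lemma pmr_iff: "x \<oplus> a \<preceq> y \<oplus> a \<longleftrightarrow> x \<preceq> y"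
  by (metis assoc nr pmr zr)
lemma nanti: "x \<preceq> y \<Longrightarrow> neg y \<preceq> neg x"
proof -
  assume "x \<preceq> y"
  hence "neg y \<oplus> x \<oplus> neg x \<preceq> neg y \<oplus> y \<oplus> neg x" by (metis pml pmr assoc)
  thus ?thesis by (metis assoc nl nr zl zr)
qed
lemma nanti_iff: "neg y \<preceq> neg x \<longleftrightarrow> x \<preceq> y" by (metis nanti nn)

lemma dml: "a \<oplus> (x \<sqinter> y) = (a \<oplus> x) \<sqinter> (a \<oplus> y)"
proof (rule le_antisym)
  show "a \<oplus> (x \<sqinter> y) \<preceq> (a \<oplus> x) \<sqinter> (a \<oplus> y)" by (simp add: le_m_iff m1 m2 pml)
  have "(a \<oplus> x) \<sqinter> (a \<oplus> y) = a \<oplus> (neg a \<oplus> ((a \<oplus> x) \<sqinter> (a \<oplus> y)))" by (metis assoc nr zl)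
  also have "neg a \<oplus> ((a \<oplus> x) \<sqinter> (a \<oplus> y)) \<preceq> x \<sqinter> y"
    by (metis assoc le_m_iff m1 m2 nl pml zl)
  hence "a \<oplus> (neg a \<oplus> ((a \<oplus> x) \<sqinter> (a \<oplus> y))) \<preceq> a \<oplus> (x \<sqinter> y)" by (rule pml)
  finally show "(a \<oplus> x) \<sqinter> (a \<oplus> y) \<preceq> a \<oplus> (x \<sqinter> y)" by simp
qed
lemma dmr: "(x \<sqinter> y) \<oplus> a = (x \<oplus> a) \<sqinter> (y \<oplus> a)"
proof (rule le_antisym)
  show "(x \<sqinter> y) \<oplus> a \<preceq> (x \<oplus> a) \<sqinter> (y \<oplus> a)" by (simp add: le_m_iff m1 m2 pmr)
  have "(x \<oplus> a) \<sqinter> (y \<oplus> a) = (((x \<oplus> a) \<sqinter> (y \<oplus> a)) \<oplus> neg a) \<oplus> a" by (metis assoc nl zr)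
  also have "((x \<oplus> a) \<sqinter> (y \<oplus> a)) \<oplus> neg a \<preceq> x \<sqinter> y"
    by (metis assoc le_m_iff m1 m2 nr pmr zr)
  hence "(((x \<oplus> a) \<sqinter> (y \<oplus> a)) \<oplus> neg a) \<oplus> a \<preceq> (x \<sqinter> y) \<oplus> a" by (rule pmr)
  finally show "(x \<oplus> a) \<sqinter> (y \<oplus> a) \<preceq> (x \<sqinter> y) \<oplus> a" by simp
qed
lemma nj: "neg (x \<squnion> y) = neg x \<sqinter> neg y"
proof (rule le_antisym)
  show "neg (x \<squnion> y) \<preceq> neg x \<sqinter> neg y" by (simp add: le_m_iff j1 j2 nanti)
  have "x \<squnion> y \<preceq> neg (neg x \<sqinter> neg y)"
    by (metis le_j_iff m1 m2 nanti_iff nn)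
  thus "neg x \<sqinter> neg y \<preceq> neg (x \<squnion> y)" by (metis nanti nn)
qed

lemma posneg: "(x \<squnion> z) \<sqinter> (neg x \<squnion> z) = z"
proof -
  have b: "neg x \<squnion> z = neg x \<oplus> (z \<squnion> x)" by (metis dl nl zr)
  have "(x \<squnion> z) \<sqinter> (neg x \<oplus> (x \<squnion> z)) = (z \<oplus> (x \<squnion> z)) \<sqinter> (neg x \<oplus> (x \<squnion> z))" by (simp add: zl)
  also have "\<dots> = (z \<sqinter> neg x) \<oplus> (x \<squnion> z)" by (simp add: dmr)
  also have "z \<sqinter> neg x = neg (z \<squnion> x)" by (simp add: nj)
  finally show ?thesis using b by (metis jc nl)
qed

lemma disj_add: "z \<preceq> a \<Longrightarrow> z \<preceq> b \<Longrightarrow> z \<preceq> c \<Longrightarrow> a \<sqinter> (b \<oplus> c) \<preceq> (a \<sqinter> b) \<oplus> (a \<sqinter> c)"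
proof -
  assume a: "z \<preceq> a" and b: "z \<preceq> b" and c: "z \<preceq> c"
  have e: "(a \<sqinter> b) \<oplus> (a \<sqinter> c) = ((a \<oplus> a) \<sqinter> (b \<oplus> a)) \<sqinter> ((a \<oplus> c) \<sqinter> (b \<oplus> c))"
    by (simp add: dml dmr ma mc)
  have "a \<preceq> a \<oplus> a" using pml[OF a, of a] zr by simp
  moreover have "a \<preceq> b \<oplus> a" using pmr[OF b, of a] zl by simp
  moreover have "a \<preceq> a \<oplus> c" using pml[OF c, of a] zr by simp
  ultimately show ?thesis unfolding e by (meson le_m_iff m1 m2 le_trans)
qed

definition nsm :: "nat \<Rightarrow> 'a \<Rightarrow> 'a" where "nsm n a = ((\<oplus>) a ^^ n) z"

lemma nsm0[simp]: "nsm 0 a = z" by (simp add: nsm_def)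
lemma nsmS: "nsm (Suc n) a = a \<oplus> nsm n a" by (simp add: nsm_def)
lemma nsm_comm: "nsm n a \<oplus> a = a \<oplus> nsm n a"
  by (induction n) (simp_all add: nsmS zl zr assoc)
lemma nsm_mono: "x \<preceq> y \<Longrightarrow> nsm n x \<preceq> nsm n y"
  by (induction n) (simp_all add: nsmS pm2)
lemma nsm_pos: "z \<preceq> x \<Longrightarrow> z \<preceq> nsm n x"
proof (induction n)
  case (Suc n) assume "z \<preceq> x" 
  thus ?case using Suc pm2[of z x z "nsm n x"] zl nsmS by simp
qed simp

lemma disj_nsm: assumes a: "z \<preceq> a" and b: "z \<preceq> b" and ab: "a \<sqinter> b = z" shows "a \<sqinter> nsm n b = z"
proof (induction n)
  case 0 show ?case using a unfolding le_def nsm0 by (subst mc)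
next
  case (Suc n)
  have "a \<sqinter> (b \<oplus> nsm n b) \<preceq> (a \<sqinter> b) \<oplus> (a \<sqinter> nsm n b)"
    using disj_add[OF a b nsm_pos[OF b]] .
  also have "(a \<sqinter> b) \<oplus> (a \<sqinter> nsm n b) = z" using Suc ab zl by metis
  finally have 1: "a \<sqinter> nsm (Suc n) b \<preceq> z" unfolding nsmS .
  have "z \<preceq> nsm (Suc n) b" using nsm_pos[OF b] .
  hence "z \<preceq> a \<sqinter> nsm (Suc n) b" using a mglb by blast
  with 1 show ?case by (rule le_antisym)
qed

lemma abs_pos: "z \<preceq> x \<squnion> neg x"
proof -
  let ?a = "x \<squnion> neg x"
  have "x \<oplus> neg x \<preceq> ?a \<oplus> ?a" by (rule pm2) (simp_all add: j1 j2)
  hence 2: "z \<preceq> ?a \<oplus> ?a" by (simp add: nr)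
  have "(?a \<sqinter> z) \<oplus> (?a \<sqinter> z) = ((?a \<oplus> ?a) \<sqinter> (z \<oplus> ?a)) \<sqinter> ((?a \<oplus> z) \<sqinter> (z \<oplus> z))"
    by (simp add: dml dmr ma)
  also have "\<dots> = ?a \<sqinter> z" using 2 unfolding zl zr le_def
    by (metis ma mc mi)
  finally have "(?a \<sqinter> z) \<oplus> (?a \<sqinter> z) = (?a \<sqinter> z) \<oplus> z" by (simp add: zr)
  hence "?a \<sqinter> z = z" by (rule cancl)
  thus ?thesis unfolding le_def by (simp add: mc)
qed

lemma abs_of_pos: "z \<preceq> x \<Longrightarrow> x \<squnion> neg x = x"
proof -
  assume "z \<preceq> x"
  hence "neg x \<preceq> x" using nanti le_trans nz by metis
  thus ?thesis using le_j jc by metis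
qed

lemma nm: "neg (x \<sqinter> y) = neg x \<squnion> neg y"
  by (metis nj nn)

lemmas [trans] = le_trans

definition issup where "issup S s \<longleftrightarrow> (\<forall>x\<in>S. x \<preceq> s) \<and> (\<forall>u. (\<forall>x\<in>S. x \<preceq> u) \<longrightarrow> s \<preceq> u)"

lemma issup_unique: "issup S s \<Longrightarrow> issup S t \<Longrightarrow> s = t"
  unfolding issup_def by (meson le_antisym)
lemma issup_ub: "issup S s \<Longrightarrow> x \<in> S \<Longrightarrow> x \<preceq> s"
  unfolding issup_def by blast
lemma issup_least: "issup S s \<Longrightarrow> (\<And>x. x \<in> S \<Longrightarrow> x \<preceq> u) \<Longrightarrow> s \<preceq> u"
  unfolding issup_def by blast
lemma issupI: "(\<And>x. x \<in> S \<Longrightarrow> x \<preceq> s) \<Longrightarrow> (\<And>u. (\<And>x. x \<in> S \<Longrightarrow> x \<preceq> u) \<Longrightarrow> s \<preceq> u) \<Longrightarrow> issup S s"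
  unfolding issup_def by blast
lemma issup_insert: "issup S s \<Longrightarrow> issup (insert a S) (a \<squnion> s)"
  unfolding issup_def by (auto simp: le_j_iff j1 j2 intro: le_trans[OF _ j2])

lemma unit_sup:
  assumes u0: "z \<preceq> u" and wu: "\<And>f. f \<sqinter> u = z \<Longrightarrow> f = z" and a0: "z \<preceq> a"
    and sp: "issup (range (\<lambda>n. (a \<sqinter> nsm (Suc n) u) \<sqinter> a)) s"
  shows "s = a"
proof -
  define c where "c n = a \<sqinter> nsm (Suc n) u" for n
  have cc: "c n \<sqinter> a = c n" for n unfolding c_def by (metis ma mc mi)
  have cs: "c n \<preceq> s" for n using issup_ub[OF sp, of "c n \<sqinter> a"] cc unfolding c_def by auto
  have sa: "s \<preceq> a" by (rule issup_least[OF sp]) (auto simp: m2)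
  have aau: "a \<preceq> a \<oplus> u" using pml[OF u0, of a] zr by simp
  have step: "(neg (c n) \<oplus> a) \<sqinter> u = neg (c n) \<oplus> c (Suc n)" for n
  proof (rule cancl[of "c n"])
    have "c n \<oplus> ((neg (c n) \<oplus> a) \<sqinter> u) = a \<sqinter> (c n \<oplus> u)"
      by (simp add: dml assoc[symmetric] nr zl)
    also have "c n \<oplus> u = (a \<oplus> u) \<sqinter> nsm (Suc (Suc n)) u"
      unfolding c_def dmr by (simp add: nsm_comm nsmS assoc)
    also have "a \<sqinter> ((a \<oplus> u) \<sqinter> nsm (Suc (Suc n)) u) = c (Suc n)"
      using aau unfolding c_def le_def by (metis ma)
    finally show "c n \<oplus> ((neg (c n) \<oplus> a) \<sqinter> u) = c n \<oplus> (neg (c n) \<oplus> c (Suc n))"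
      by (simp add: assoc[symmetric] nr zl)
  qed
  define x where "x = (neg s \<oplus> a) \<sqinter> u"
  have xb: "c n \<preceq> s \<oplus> neg x" for n
  proof -
    have "x \<preceq> (neg (c n) \<oplus> a) \<sqinter> u"
      unfolding x_def using pmr[OF nanti[OF cs[of n]], of a] by (meson le_m_iff m1 m2 le_trans)
    also have "\<dots> \<preceq> neg (c n) \<oplus> s" unfolding step by (rule pml[OF cs])
    finally have "c n \<oplus> x \<preceq> c n \<oplus> (neg (c n) \<oplus> s)" by (rule pml)
    hence "c n \<oplus> x \<preceq> s" by (simp add: assoc[symmetric] nr zl)
    hence "c n \<oplus> x \<oplus> neg x \<preceq> s \<oplus> neg x" by (rule pmr)
    thus ?thesis by (simp add: assoc nr zr)
  qed
  have "s \<preceq> s \<oplus> neg x"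
    by (rule issup_least[OF sp]) (use xb cc in \<open>auto simp: c_def\<close>)
  hence "s \<oplus> z \<preceq> s \<oplus> neg x" by (simp add: zr)
  hence "z \<preceq> neg x" by (simp add: pml_iff)
  hence x1: "x \<preceq> z" using nanti_iff nz by metis
  have "neg s \<oplus> s \<preceq> neg s \<oplus> a" by (rule pml[OF sa])
  hence "z \<preceq> neg s \<oplus> a" by (simp add: nl)
  hence "z \<preceq> x" unfolding x_def using u0 by (rule mglb)
  hence "x = z" using x1 le_antisym by blast
  hence "neg s \<oplus> a = z" unfolding x_def by (rule wu)
  thus "s = a" by (metis assoc nr zl zr)
qed

lemma var_sup:
  assumes A1: "\<And>g f. B g f = B g (\<lambda>n. f n \<sqinter> g)"
    and A2: "\<And>g f. B g f = (f 0 \<sqinter> g) \<squnion> B g (\<lambda>n. f (Suc n))"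
    and A3: "\<And>g f h. B g (\<lambda>n. f n \<sqinter> h) \<preceq> h"
  shows "issup (range (\<lambda>n. f n \<sqinter> g)) (B g f)"
proof (rule issupI)
  have ub: "\<And>f. f n \<sqinter> g \<preceq> B g f" for n
  proof (induction n)
    case 0 show ?case by (subst A2) (rule j1)
  next
    case (Suc n)
    have "f (Suc n) \<sqinter> g \<preceq> B g (\<lambda>n. f (Suc n))" using Suc[of "\<lambda>n. f (Suc n)"] by simp
    also have "\<dots> \<preceq> B g f" by (subst (2) A2) (rule j2)
    finally show ?case .
  qed
  show "x \<preceq> B g f" if "x \<in> range (\<lambda>n. f n \<sqinter> g)" for x using that ub by auto
  fix u assume "\<And>x. x \<in> range (\<lambda>n. f n \<sqinter> g) \<Longrightarrow> x \<preceq> u"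
  hence "\<And>n. (f n \<sqinter> g) \<sqinter> u = f n \<sqinter> g" unfolding le_def by auto
  hence "B g f = B g (\<lambda>n. (f n \<sqinter> g) \<sqinter> u)" by (subst A1) simp
  thus "B g f \<preceq> u" using A3 by simp
qed

lemma var_unit:
  assumes sup: "\<And>g f. issup (range (\<lambda>n. f n \<sqinter> g)) (B g f)"
    and U: "\<And>f. B (f \<squnion> neg f) (\<lambda>n. (f \<squnion> neg f) \<sqinter> nsm (Suc n) u) = f \<squnion> neg f"
  shows "z \<preceq> u" and "\<And>f. f \<sqinter> u = z \<Longrightarrow> f = z"
proof -
  have key: "a = z" if a0: "z \<preceq> a" and d: "\<And>n. a \<sqinter> nsm (Suc n) u \<preceq> z" for a
  proof -
    have "a = B a (\<lambda>n. a \<sqinter> nsm (Suc n) u)" using U[of a] abs_of_pos[OF a0] by simp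
    also have "\<dots> \<preceq> z"
      by (rule issup_least[OF sup]) (auto intro: le_trans[OF m1 d])
    finally show ?thesis using a0 le_antisym by blast
  qed
  define N where "N = neg u \<squnion> z"
  define P where "P = u \<squnion> z"
  have N0: "z \<preceq> N" and P0: "z \<preceq> P" unfolding N_def P_def by (simp_all add: j2)
  have NP: "N \<sqinter> P = z" unfolding N_def P_def using posneg[of u] by (simp add: mc)
  have "N = z"
  proof (rule key[OF N0])
    fix n
    have "N \<sqinter> nsm (Suc n) u \<preceq> N \<sqinter> nsm (Suc n) P"
      using mglb[OF m1 le_trans[OF m2 nsm_mono[OF j1]]] unfolding P_def .
    also have "\<dots> = z" by (rule disj_nsm[OF N0 P0 NP])
    finally show "N \<sqinter> nsm (Suc n) u \<preceq> z" .
  qed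
  hence "neg (u \<sqinter> z) = z" unfolding N_def by (simp add: nm)
  hence "u \<sqinter> z = z" by (metis nn nz)
  thus u0: "z \<preceq> u" unfolding le_def by (simp add: mc)
  fix f assume fu: "f \<sqinter> u = z"
  have f0: "z \<preceq> f" using m1[of f u] fu by simp
  show "f = z"
  proof (rule key[OF f0])
    fix n show "f \<sqinter> nsm (Suc n) u \<preceq> z" using disj_nsm[OF f0 u0 fu] by simp
  qed
qed

end

lemma lg_interp: "lgroup_ax G \<Longrightarrow> lgrp (zer G) (pls G) (ng G) (jn G) (mt G)"
  unfolding lgroup_ax_def lgrp_def by blast

lemma leq_conv: "lgroup_ax G \<Longrightarrow> leq G = lgrp.le (mt G)"
  by (intro ext) (simp add: leq_def lgrp.le_def[OF lg_interp])
lemma is_sup_conv: "lgroup_ax G \<Longrightarrow> is_sup G = lgrp.issup (mt G)"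
  by (intro ext) (simp add: is_sup_def lgrp.issup_def[OF lg_interp] leq_conv)
lemma nsmul_conv: "lgroup_ax G \<Longrightarrow> nsmul G = lgrp.nsm (zer G) (pls G)"
  by (intro ext) (simp add: nsmul_def lgrp.nsm_def[OF lg_interp])

lemma Fu_simps[simp]: "zer (Fu G) = zer G" "pls (Fu G) = pls G" "ng (Fu G) = ng G"
  "jn (Fu G) = jn G" "mt (Fu G) = mt G" "unt (Fu G) = unt G"
  "bigv (Fu G) = (\<lambda>g f. THE s. is_sup G (range (\<lambda>n. mt G (f n) g)) s)"
  by (simp_all add: Fu_def)
lemma Uu_simps[simp]: "zer (Uu A) = zer A" "pls (Uu A) = pls A" "ng (Uu A) = ng A"
  "jn (Uu A) = jn A" "mt (Uu A) = mt A" "unt (Uu A) = unt A"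
  by (simp_all add: Uu_def)

lemma Fu_sup:
  assumes "sigma_obj G"
  shows "is_sup G (range (\<lambda>n. mt G (f n) g)) (bigv (Fu G) g f)"
proof -
  have lg: "lgroup_ax G" and sc: "sigma_complete G" using assms sigma_obj_def by auto
  interpret lgrp "zer G" "pls G" "ng G" "jn G" "mt G" by (rule lg_interp[OF lg])
  have "\<exists>u. \<forall>n. leq G (mt G (f n) g) u" using m2 unfolding leq_conv[OF lg] by blast
  then obtain s where s: "is_sup G (range (\<lambda>n. mt G (f n) g)) s"
    using sc[unfolded sigma_complete_def, rule_format, of "\<lambda>n. mt G (f n) g"] by blast
  have "(THE s. is_sup G (range (\<lambda>n. mt G (f n) g)) s) = s"
    using s issup_unique unfolding is_sup_conv[OF lg] by blast
  thus ?thesis using s by simp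
qed

lemma range_shift: "range h = insert (h 0) (range (\<lambda>n. h (Suc n)))"
  by (auto simp: image_iff) (metis old.nat.exhaust)

lemma nsmul_Fu: "nsmul (Fu G) = nsmul G"
  by (intro ext) (simp add: nsmul_def)
lemma leq_Fu: "leq (Fu G) = leq G"
  by (intro ext) (simp add: leq_def)
lemma absv_Fu: "absv (Fu G) = absv G"
  by (intro ext) (simp add: absv_def)

lemma P1: assumes so: "sigma_obj G" shows "vobj (Fu G)"
proof -
  have lg: "lgroup_ax G" and wu: "weak_unit G (unt G)" using so sigma_obj_def by auto
  interpret lgrp "zer G" "pls G" "ng G" "jn G" "mt G" by (rule lg_interp[OF lg])
  have S: "issup (range (\<lambda>n. mt G (f n) g)) (bigv (Fu G) g f)" for g f
    using Fu_sup[OF so] is_sup_conv[OF lg] by metis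
  have L: "lgroup_ax (Fu G)" using lg unfolding lgroup_ax_def Fu_simps .
  have A1: "bigv (Fu G) g f = bigv (Fu G) g (\<lambda>n. mt (Fu G) (f n) g)" for g f
    by (simp add: ma mi)
  have A2: "bigv (Fu G) g f = jn (Fu G) (mt (Fu G) (f 0) g) (bigv (Fu G) g (\<lambda>n. f (Suc n)))" for g f
  proof -
    have "issup (range (\<lambda>n. mt G (f n) g)) (jn G (mt G (f 0) g) (bigv (Fu G) g (\<lambda>n. f (Suc n))))"
      using issup_insert[OF S[where g=g and f="\<lambda>n. f (Suc n)"], of "mt G (f 0) g"]
      by (metis (no_types) range_shift[of "\<lambda>n. mt G (f n) g"])
    thus ?thesis using issup_unique[OF S[where g=g and f=f]] by simp
  qed
  have A3: "leq (Fu G) (bigv (Fu G) g (\<lambda>n. mt (Fu G) (f n) h)) h" for g f h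
  proof -
    have "lgrp.le (mt G) (bigv (Fu G) g (\<lambda>n. mt G (f n) h)) h"
      by (rule issup_least[OF S]) (auto intro: le_trans[OF m1 m2])
    thus ?thesis by (simp add: leq_Fu leq_conv[OF lg])
  qed
  have U: "bigv (Fu G) (absv (Fu G) f) (\<lambda>n. mt (Fu G) (absv (Fu G) f) (nsmul (Fu G) (Suc n) (unt (Fu G))))
      = absv (Fu G) f" for f
  proof -
    let ?a = "jn G f (ng G f)"
    have u0: "lgrp.le (mt G) (zer G) (unt G)" and w: "\<And>f. mt G f (unt G) = zer G \<Longrightarrow> f = zer G"
      using wu unfolding weak_unit_def leq_conv[OF lg] by auto
    have "bigv (Fu G) ?a (\<lambda>n. mt G ?a (nsm (Suc n) (unt G))) = ?a"
      by (rule unit_sup[OF u0 w abs_pos S]) 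
    thus ?thesis by (simp add: absv_Fu nsmul_Fu nsmul_conv[OF lg] absv_def)
  qed
  show ?thesis unfolding vobj_def using L A1 A2 A3 U by blast
qed

lemma leq_Uu: "leq (Uu A) = leq A"
  by (intro ext) (simp add: leq_def)
lemma is_sup_Uu: "is_sup (Uu A) = is_sup A"
  by (intro ext) (simp add: is_sup_def leq_Uu)
lemma is_sup_Fu: "is_sup (Fu G) = is_sup G"
  by (intro ext) (simp add: is_sup_def leq_Fu)

lemma vobj_lg: "vobj A \<Longrightarrow> lgroup_ax A" by (simp add: vobj_def)

lemma Uu_sup: assumes v: "vobj A"
  shows "is_sup A (range (\<lambda>n. mt A (f n) g)) (bigv A g f)"
proof -
  have lg: "lgroup_ax A" using v by (simp add: vobj_def)
  have A1: "\<And>g f. bigv A g f = bigv A g (\<lambda>n. mt A (f n) g)"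
   and A2: "\<And>g f. bigv A g f = jn A (mt A (f 0) g) (bigv A g (\<lambda>n. f (Suc n)))"
   and A3: "\<And>g f h. leq A (bigv A g (\<lambda>n. mt A (f n) h)) h" using v unfolding vobj_def by blast+
  interpret lgrp "zer A" "pls A" "ng A" "jn A" "mt A" by (rule lg_interp[OF lg])
  have "lgrp.issup (mt A) (range (\<lambda>n. mt A (f n) g)) (bigv A g f)"
    by (rule var_sup[OF A1 A2 A3[unfolded leq_conv[OF lg]]])
  thus ?thesis by (simp add: is_sup_conv[OF lg])
qed

lemma P2: assumes v: "vobj A" shows "sigma_obj (Uu A)"
proof -
  have lg: "lgroup_ax A" using v by (simp add: vobj_def)
  have L: "lgroup_ax (Uu A)" using lg unfolding lgroup_ax_def Uu_simps .
  have U: "\<And>f. bigv A (absv A f) (\<lambda>n. mt A (absv A f) (nsmul A (Suc n) (unt A))) = absv A f"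
    using v unfolding vobj_def by blast
  interpret lgrp "zer A" "pls A" "ng A" "jn A" "mt A" by (rule lg_interp[OF lg])
  have S: "lgrp.issup (mt A) (range (\<lambda>n. mt A (f n) g)) (bigv A g f)" for g f
    using Uu_sup[OF v] is_sup_conv[OF lg] by metis
  have SC: "sigma_complete (Uu A)"
    unfolding sigma_complete_def leq_Uu is_sup_Uu
  proof (intro allI impI)
    fix f :: "nat \<Rightarrow> 'a" assume "\<exists>u. \<forall>n. leq A (f n) u"
    then obtain u where "\<And>n. leq A (f n) u" by blast
    hence "\<And>n. mt A (f n) u = f n" by (simp add: leq_def)
    hence "range (\<lambda>n. mt A (f n) u) = range f" by simp
    thus "\<exists>s. is_sup A (range f) s" using Uu_sup[OF v, of f u] by auto
  qed
  have U': "bigv A (jn A f (ng A f)) (\<lambda>n. mt A (jn A f (ng A f)) (nsm (Suc n) (unt A))) = jn A f (ng A f)" for f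
    using U[of f] by (simp add: absv_def nsmul_conv[OF lg])
  note VU = var_unit[OF S U']
  have WU: "weak_unit (Uu A) (unt (Uu A))"
    unfolding weak_unit_def Uu_simps leq_Uu leq_conv[OF lg] using VU by blast
  show ?thesis unfolding sigma_obj_def using L SC WU by blast
qed

lemma P3: assumes sG: "sigma_obj G" and sH: "sigma_obj H" and hm: "sigma_mor G H h"
  shows "vmor (Fu G) (Fu H) h"
proof -
  have lG: "lgroup_ax G" using sG sigma_obj_def by auto
  have lH: "lgroup_ax H" using sH sigma_obj_def by auto
  have hp: "\<And>x y. h (pls G x y) = pls H (h x) (h y)" and hj: "\<And>x y. h (jn G x y) = jn H (h x) (h y)"
    and hmt: "\<And>x y. h (mt G x y) = mt H (h x) (h y)" and hc: "sigma_cont G H h"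
    and hu: "h (unt G) = unt H"
    using hm unfolding sigma_mor_def lmorph_def by blast+
  interpret g: lgrp "zer G" "pls G" "ng G" "jn G" "mt G" by (rule lg_interp[OF lG])
  interpret k: lgrp "zer H" "pls H" "ng H" "jn H" "mt H" by (rule lg_interp[OF lH])
  have hz: "h (zer G) = zer H"
  proof (rule k.cancl)
    show "pls H (h (zer G)) (h (zer G)) = pls H (h (zer G)) (zer H)"
      using hp[of "zer G" "zer G"] g.zl k.zr by simp
  qed
  have hn: "h (ng G x) = ng H (h x)" for x
  proof (rule k.cancr)
    show "pls H (h (ng G x)) (h x) = pls H (ng H (h x)) (h x)"
      using hp[of "ng G x" x] g.nl k.nl hz by simp
  qed
  have hb: "h (bigv (Fu G) g f) = bigv (Fu H) (h g) (h \<circ> f)" for g f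
  proof -
    have 0: "is_sup H (range (h \<circ> (\<lambda>n. mt G (f n) g))) (h (bigv (Fu G) g f))"
      using hc[unfolded sigma_cont_def, rule_format, OF Fu_sup[OF sG]] .
    have E: "h \<circ> (\<lambda>n. mt G (f n) g) = (\<lambda>n. mt H ((h \<circ> f) n) (h g))"
      by (simp add: hmt comp_def)
    have 1: "is_sup H (range (\<lambda>n. mt H ((h \<circ> f) n) (h g))) (h (bigv (Fu G) g f))"
      using 0 unfolding E .
    have 2: "is_sup H (range (\<lambda>n. mt H ((h \<circ> f) n) (h g))) (bigv (Fu H) (h g) (h \<circ> f))"
      by (rule Fu_sup[OF sH])
    show ?thesis using 1 2 unfolding is_sup_conv[OF lH] by (rule k.issup_unique)
  qed
  show ?thesis unfolding vmor_def Fu_simps(1-6)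
    apply (intro conjI allI)
    apply (rule hz hu hp hn hj hmt hb)+
    done
qed

lemma P4: assumes vA: "vobj A" and vB: "vobj B" and hm: "vmor A B h"
  shows "sigma_mor (Uu A) (Uu B) h"
proof -
  have lA: "lgroup_ax A" and lB: "lgroup_ax B" using vA vB by (simp_all add: vobj_def)
  interpret a: lgrp "zer A" "pls A" "ng A" "jn A" "mt A" by (rule lg_interp[OF lA])
  interpret b: lgrp "zer B" "pls B" "ng B" "jn B" "mt B" by (rule lg_interp[OF lB])
  have hmt: "\<And>x y. h (mt A x y) = mt B (h x) (h y)"
    and hb: "\<And>g f. h (bigv A g f) = bigv B (h g) (h \<circ> f)"
    using hm unfolding vmor_def by blast+
  have LM: "lmorph (Uu A) (Uu B) h" using hm unfolding vmor_def lmorph_def Uu_simps by blast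
  have SC: "sigma_cont (Uu A) (Uu B) h"
    unfolding sigma_cont_def is_sup_Uu
  proof (intro allI impI)
    fix f :: "nat \<Rightarrow> 'a" and s assume sp: "is_sup A (range f) s"
    have fs: "mt A (f n) s = f n" for n using sp unfolding is_sup_def leq_def by blast
    have "is_sup A (range f) (bigv A s f)" using Uu_sup[OF vA, of f s] fs by simp
    hence ss: "bigv A s f = s" using a.issup_unique sp unfolding is_sup_conv[OF lA] by blast
    have E: "(\<lambda>n. mt B ((h \<circ> f) n) (h s)) = h \<circ> f"
      by (rule ext) (simp add: hmt[symmetric] fs)
    have e2: "bigv B (h s) (h \<circ> f) = h s" using hb[of s f] ss by simp
    show "is_sup B (range (h \<circ> f)) (h s)"
      using Uu_sup[OF vB, of "h \<circ> f" "h s"] unfolding E e2 .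
  qed
  show ?thesis unfolding sigma_mor_def using LM SC hm unfolding vmor_def by simp
qed

lemma P5: "Uu (Fu G) = G"
  by (simp add: Uu_def Fu_def)

lemma P6: assumes v: "vobj A" shows "Fu (Uu A) = A"
proof -
  have lA: "lgroup_ax A" using v by (simp add: vobj_def)
  interpret a: lgrp "zer A" "pls A" "ng A" "jn A" "mt A" by (rule lg_interp[OF lA])
  have "bigv A g f = (THE s. is_sup A (range (\<lambda>n. mt A (f n) g)) s)" for g f
  proof (rule the_equality[symmetric])
    show "is_sup A (range (\<lambda>n. mt A (f n) g)) (bigv A g f)" by (rule Uu_sup[OF v])
    fix s assume "is_sup A (range (\<lambda>n. mt A (f n) g)) s"
    thus "s = bigv A g f" using Uu_sup[OF v, of f g] unfolding is_sup_conv[OF lA] by (rule a.issup_unique)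
  qed
  hence "bigv A = (\<lambda>g f. THE s. is_sup A (range (\<lambda>n. mt A (f n) g)) s)" by (intro ext)
  thus ?thesis unfolding Fu_def Uu_simps is_sup_Uu by simp
qed

theorem mainTheorem2:
  shows "(\<forall>G :: 'a lgu. sigma_obj G \<longrightarrow> vobj (Fu G)) \<and>
         (\<forall>A :: 'a vslu. vobj A \<longrightarrow> sigma_obj (Uu A)) \<and>
         (\<forall>(G :: 'a lgu) (H :: 'b lgu) h. sigma_obj G \<and> sigma_obj H \<and> sigma_mor G H h
              \<longrightarrow> vmor (Fu G) (Fu H) h) \<and>
         (\<forall>(A :: 'a vslu) (B :: 'b vslu) h. vobj A \<and> vobj B \<and> vmor A B h
              \<longrightarrow> sigma_mor (Uu A) (Uu B) h) \<and>
         (\<forall>G :: 'a lgu. sigma_obj G \<longrightarrow> Uu (Fu G) = G) \<and>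
         (\<forall>A :: 'a vslu. vobj A \<longrightarrow> Fu (Uu A) = A)"
  by (auto intro: P1 P2 P3 P4 P6 simp: P5)

end
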